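(* Let $d\ge 2$, let $\mu\in\mathbb{T}^{d-1}$ with $(1,\mu)$ rationally independent, and let $\mathcal{A}\in C^\omega(\mathbb{T}^{d-1},SL(2,\mathbb{R}))$. Suppose that $(\mu,\mathcal{A})$ is analytically conjugated to a cocycle $(\mu,\widetilde{\mathcal{A}})$, i.e. there is $B\in C^\omega(2\mathbb{T}^{d-1},SL(2,\mathbb{R}))$ with $B(\widetilde\theta+\mu)\mathcal{A}(\widetilde\theta)B(\widetilde\theta)^{-1}=\widetilde{\mathcal{A}}(\widetilde\theta)$, and that $(\mu,\widetilde{\mathcal{A}})$ can be embedded into an analytic quasi-periodic linear system. Then $(\mu,\mathcal{A})$ can also be embedded into an analytic quasi-periodic linear system.
   Context: $\mathbb{T}=\mathbb{R}/\mathbb{Z}$ and $2\mathbb{T}=\mathbb{R}/2\mathbb{Z}$; conjugacies are allowed to be defined on $2\mathbb{T}^{m}=(\mathbb{R}/2\mathbb{Z})^m$. The cocycle $(\mu,\mathcal{A})$ is the map $(\widetilde\theta,v)\mapsto(\widetilde\theta+\mu,\mathcal{A}(\widetilde\theta)v)$. A cocycle $(\mu,\mathcal{A})$ "can be embedded into an analytic quasi-periodic linear system" if there is a real-analytic $A:2\mathbb{T}^d\to sl(2,\mathbb{R})$ (equivalently an analytic flow $\Phi^t(\theta)\in SL(2,\mathbb{R})$, $\theta\in 2\mathbb{T}^d$, of $\dot x=A(\theta)x$, $\dot\theta=\omega=(1,\mu)$, with $\Phi^0=I$ and $\Phi^{t+s}(\theta)=\Phi^t(\theta+s\omega)\Phi^s(\theta)$)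 such that the Poincaré map satisfies $\Phi^1(0,\widetilde\theta)=\mathcal{A}(\widetilde\theta)$ for all $\widetilde\theta$. *)

theory Defs
  imports "HOL-Analysis.Analysis"
begin

text \<open>Real analyticity of a scalar function on a Euclidean space: near every point it is
the sum of an (unconditionally, hence absolutely) convergent power series in the coordinates
with respect to the standard basis.\<close>
definition real_analytic_at :: "('a::euclidean_space \<Rightarrow> real) \<Rightarrow> 'a \<Rightarrow> bool" where
  "real_analytic_at f x \<longleftrightarrow>
     (\<exists>r>0. \<exists>c :: ('a \<Rightarrow> nat) \<Rightarrow> real. \<forall>y\<in>ball x r.
        ((\<lambda>\<alpha>. c \<alpha> * (\<Prod>b\<in>Basis. ((y - x) \<bullet> b) ^ \<alpha> b))
           has_sum f y) {\<alpha>. \<forall>b. b \<notin> Basis \<longrightarrow> \<alpha> b = 0})"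

definition real_analytic :: "('a::euclidean_space \<Rightarrow> real) \<Rightarrow> bool" where
  "real_analytic f \<longleftrightarrow> (\<forall>x. real_analytic_at f x)"

definition analytic_mat :: "('a::euclidean_space \<Rightarrow> real^2^2) \<Rightarrow> bool" where
  "analytic_mat F \<longleftrightarrow> (\<forall>i j. real_analytic (\<lambda>x. F x $ i $ j))"

text \<open>Periodicity with period p in every coordinate direction: a map defined on
(R / pZ)^m, lifted to R^m.\<close>
definition periodic_coord :: "real \<Rightarrow> ('a::euclidean_space \<Rightarrow> 'b) \<Rightarrow> bool" where
  "periodic_coord p F \<longleftrightarrow> (\<forall>x. \<forall>b\<in>Basis. F (x + p *\<^sub>R b) = F x)"

definition trace2 :: "real^2^2 \<Rightarrow> real" where
  "trace2 M = M $ 1 $ 1 + M $ 2 $ 2"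

definition rat_indep_1 :: "real^'n \<Rightarrow> bool" where
  "rat_indep_1 \<mu> \<longleftrightarrow> (\<forall>(k0::int) (k::'n \<Rightarrow> int).
      real_of_int k0 + (\<Sum>i\<in>UNIV. real_of_int (k i) * \<mu> $ i) = 0 \<longrightarrow> k0 = 0 \<and> (\<forall>i. k i = 0))"

text \<open>The cocycle (mu, F) can be embedded into an analytic quasi-periodic linear system:
there is an analytic A on 2T^d (points written (theta_0, theta~) in R x R^(d-1), 2-periodic in
every coordinate) with values in sl(2,R), whose fundamental solution Phi^t(theta) of
x' = A(theta + t omega) x, omega = (1, mu), Phi^0 = I, has Poincare map
Phi^1(0, theta~) = F(theta~).\<close>
definition embeddable :: "real^'n \<Rightarrow> (real^'n \<Rightarrow> real^2^2) \<Rightarrow> bool" where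
  "embeddable \<mu> F \<longleftrightarrow>
     (\<exists>A :: real \<times> (real^'n) \<Rightarrow> real^2^2.
        analytic_mat A \<and> periodic_coord 2 A \<and> (\<forall>\<theta>. trace2 (A \<theta>) = 0) \<and>
        (\<exists>\<Phi> :: real \<Rightarrow> real \<times> (real^'n) \<Rightarrow> real^2^2.
           (\<forall>\<theta>. \<Phi> 0 \<theta> = mat 1) \<and>
           (\<forall>\<theta> t. ((\<lambda>s. \<Phi> s \<theta>) has_vector_derivative
                      (A (\<theta> + t *\<^sub>R (1, \<mu>)) ** \<Phi> t \<theta>)) (at t)) \<and>
           (\<forall>\<theta>'. \<Phi> 1 (0, \<theta>') = F \<theta>')))"

end

theory Submission
  imports Defs
begin
definition idx :: "('a::euclidean_space \<Rightarrow> nat) set" where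
  "idx = {\<alpha>. \<forall>b. b \<notin> Basis \<longrightarrow> \<alpha> b = 0}"
definition mon :: "('a::euclidean_space \<Rightarrow> nat) \<Rightarrow> 'a \<Rightarrow> real" where
  "mon \<alpha> h = (\<Prod>b\<in>Basis. (h \<bullet> b) ^ \<alpha> b)"
definition deg :: "('a::euclidean_space \<Rightarrow> nat) \<Rightarrow> nat" where
  "deg \<alpha> = (\<Sum>b\<in>Basis. \<alpha> b)"
definition pdisc :: "real \<Rightarrow> 'a::euclidean_space \<Rightarrow> bool" where
  "pdisc s h \<longleftrightarrow> (\<forall>b\<in>Basis. \<bar>h \<bullet> b\<bar> \<le> s)"
definition pser :: "('a::euclidean_space \<Rightarrow> real) \<Rightarrow> 'a \<Rightarrow> real \<Rightarrow> (('a \<Rightarrow> nat) \<Rightarrow> real) \<Rightarrow> bool" where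
  "pser f x s c \<longleftrightarrow> 0 < s \<and> (\<forall>h. pdisc s h \<longrightarrow> ((\<lambda>\<alpha>. c \<alpha> * mon \<alpha> h) has_sum f (x + h)) idx)"

lemma mon_abs_le: "pdisc s h \<Longrightarrow> \<bar>mon \<alpha> h\<bar> \<le> s ^ deg \<alpha>"
proof -
  assume h: "pdisc s h"
  have "\<bar>mon \<alpha> h\<bar> = (\<Prod>b\<in>Basis. \<bar>h \<bullet> b\<bar> ^ \<alpha> b)"
    by (simp add: mon_def abs_prod power_abs)
  also have "\<dots> \<le> (\<Prod>b\<in>Basis. s ^ \<alpha> b)"
    using h by (intro prod_mono) (auto simp: pdisc_def intro!: power_mono)
  also have "\<dots> = s ^ deg \<alpha>" by (simp add: deg_def power_sum)
  finally show ?thesis .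
qed

definition corner :: "real \<Rightarrow> 'a::euclidean_space" where
  "corner s = (\<Sum>b\<in>Basis. s *\<^sub>R b)"

lemma corner_inner: "b \<in> Basis \<Longrightarrow> corner s \<bullet> b = s"
  unfolding corner_def by (simp add: inner_sum_left_Basis)

lemma mon_corner: "mon \<alpha> (corner s) = s ^ deg \<alpha>"
  by (simp add: mon_def corner_inner deg_def power_sum)

lemma pdisc_corner: "0 \<le> s \<Longrightarrow> pdisc s (corner s)"
  by (simp add: pdisc_def corner_inner)

lemma pser_abs:
  assumes "pser f x s c"
  shows "(\<lambda>\<alpha>. \<bar>c \<alpha>\<bar> * s ^ deg \<alpha>) summable_on idx"
proof -
  have s: "0 < s" and all: "\<forall>h. pdisc s h \<longrightarrow> ((\<lambda>\<alpha>. c \<alpha> * mon \<alpha> h) has_sum f (x + h)) idx"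
    using assms unfolding pser_def by simp_all
  have "((\<lambda>\<alpha>. c \<alpha> * mon \<alpha> (corner s)) has_sum f (x + corner s)) idx"
    by (rule all[rule_format, OF pdisc_corner[OF less_imp_le[OF s]]])
  hence "(\<lambda>\<alpha>. c \<alpha> * mon \<alpha> (corner s)) summable_on idx"
    by (rule has_sum_imp_summable)
  hence "(\<lambda>\<alpha>. c \<alpha> * s ^ deg \<alpha>) summable_on idx"
    unfolding mon_corner .
  hence "(\<lambda>\<alpha>. norm (c \<alpha> * s ^ deg \<alpha>)) summable_on idx"
    by (rule summable_on_iff_abs_summable_on_real[THEN iffD1])
  moreover have "\<And>\<alpha>. norm (c \<alpha> * s ^ deg \<alpha>) = \<bar>c \<alpha>\<bar> * s ^ deg \<alpha>"
    using s by (simp add: abs_mult)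
  ultimately show ?thesis by simp
qed

lemma pser_abs_h:
  assumes "pser f x s c" "pdisc s h"
  shows "(\<lambda>\<alpha>. norm (c \<alpha> * mon \<alpha> h)) summable_on idx"
proof (rule summable_on_comparison_test[OF pser_abs[OF assms(1)]])
  fix \<alpha> 
  have "\<bar>mon \<alpha> h\<bar> \<le> s ^ deg \<alpha>" by (rule mon_abs_le[OF assms(2)])
  hence "\<bar>c \<alpha>\<bar> * \<bar>mon \<alpha> h\<bar> \<le> \<bar>c \<alpha>\<bar> * s ^ deg \<alpha>"
    by (rule mult_left_mono) simp
  thus "norm (c \<alpha> * mon \<alpha> h) \<le> \<bar>c \<alpha>\<bar> * s ^ deg \<alpha>"
    by (simp add: abs_mult)
  show "0 \<le> norm (c \<alpha> * mon \<alpha> h)" by simp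
qed

lemma pdisc_mono: "pdisc s h \<Longrightarrow> s \<le> s' \<Longrightarrow> pdisc s' h"
  unfolding pdisc_def by (meson order_trans)

lemma pser_mono: "pser f x s c \<Longrightarrow> 0 < s' \<Longrightarrow> s' \<le> s \<Longrightarrow> pser f x s' c"
  unfolding pser_def using pdisc_mono by blast

lemma idx_eq: "{\<alpha>. \<forall>b. b \<notin> Basis \<longrightarrow> \<alpha> b = 0} = idx" by (simp add: idx_def)

lemma analytic_at_iff: "real_analytic_at f x \<longleftrightarrow> (\<exists>s c. pser f x s c)"
proof
  assume "real_analytic_at f x"
  then obtain r c where r: "r > 0" and
    hs: "\<forall>y\<in>ball x r. ((\<lambda>\<alpha>. c \<alpha> * (\<Prod>b\<in>Basis. ((y - x) \<bullet> b) ^ \<alpha> b)) has_sum f y) idx"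
    unfolding real_analytic_at_def idx_eq by blast
  define s where "s = r / (2 * DIM('a))"
  have s: "s > 0" using r by (simp add: s_def)
  have "pser f x s c" unfolding pser_def
  proof (intro conjI allI impI s)
    fix h :: 'a assume h: "pdisc s h"
    have "norm h \<le> (\<Sum>b\<in>Basis. \<bar>h \<bullet> b\<bar>)" by (rule norm_le_l1)
    also have "\<dots> \<le> (\<Sum>b\<in>(Basis::'a set). s)" using h by (intro sum_mono) (auto simp: pdisc_def)
    also have "\<dots> = DIM('a) * s" by simp
    also have "\<dots> < r" using r by (simp add: s_def)
    finally have "x + h \<in> ball x r" by (simp add: dist_norm)
    from hs[rule_format, OF this] show "((\<lambda>\<alpha>. c \<alpha> * mon \<alpha> h) has_sum f (x + h)) idx"
      by (simp add: mon_def)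
  qed
  thus "\<exists>s c. pser f x s c" by blast
next
  assume "\<exists>s c. pser f x s c"
  then obtain s c where p: "pser f x s c" by blast
  show "real_analytic_at f x" unfolding real_analytic_at_def idx_eq
  proof (intro exI conjI ballI)
    show "s > 0" using p by (simp add: pser_def)
    fix y assume y: "y \<in> ball x s"
    have "pdisc s (y - x)" unfolding pdisc_def
    proof
      fix b :: 'a assume b: "b \<in> Basis"
      have "\<bar>(y - x) \<bullet> b\<bar> \<le> norm (y - x)" by (rule Basis_le_norm[OF b])
      also have "\<dots> < s" using y by (simp add: dist_norm) (metis norm_minus_commute)
      finally show "\<bar>(y - x) \<bullet> b\<bar> \<le> s" by simp
    qed
    with p have "((\<lambda>\<alpha>. c \<alpha> * mon \<alpha> (y - x)) has_sum f (x + (y - x))) idx"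
      unfolding pser_def by (elim conjE allE impE) assumption+
    thus "((\<lambda>\<alpha>. c \<alpha> * (\<Prod>b\<in>Basis. ((y - x) \<bullet> b) ^ \<alpha> b)) has_sum f y) idx"
      by (simp add: mon_def)
  qed
qed

lemma pser_add:
  assumes "pser f x s c" "pser g x s d"
  shows "pser (\<lambda>y. f y + g y) x s (\<lambda>\<alpha>. c \<alpha> + d \<alpha>)"
  unfolding pser_def
proof (intro conjI allI impI)
  show "0 < s" using assms(1) unfolding pser_def by simp
  fix h :: 'a assume h: "pdisc s h"
  have 1: "((\<lambda>\<alpha>. c \<alpha> * mon \<alpha> h) has_sum f (x + h)) idx" using assms(1) h unfolding pser_def by simp
  have 2: "((\<lambda>\<alpha>. d \<alpha> * mon \<alpha> h) has_sum g (x + h)) idx" using assms(2) h unfolding pser_def by simp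
  show "((\<lambda>\<alpha>. (c \<alpha> + d \<alpha>) * mon \<alpha> h) has_sum f (x + h) + g (x + h)) idx"
    using has_sum_add[OF 1 2] by (simp add: distrib_right)
qed

lemma pser_cmult:
  assumes "pser f x s c"
  shows "pser (\<lambda>y. a * f y) x s (\<lambda>\<alpha>. a * c \<alpha>)"
  unfolding pser_def
proof (intro conjI allI impI)
  show "0 < s" using assms(1) unfolding pser_def by simp
  fix h :: 'a assume h: "pdisc s h"
  have 1: "((\<lambda>\<alpha>. c \<alpha> * mon \<alpha> h) has_sum f (x + h)) idx" using assms(1) h unfolding pser_def by simp
  show "((\<lambda>\<alpha>. (a * c \<alpha>) * mon \<alpha> h) has_sum a * f (x + h)) idx"
    using has_sum_cmult_right[OF 1, of a] by (simp add: mult.assoc)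
qed

lemma mon_add: "mon (\<lambda>b. \<alpha> b + \<beta> b) h = mon \<alpha> h * mon \<beta> h"
  by (simp add: mon_def power_add prod.distrib)

definition dset :: "('a::euclidean_space \<Rightarrow> nat) \<Rightarrow> ('a \<Rightarrow> nat) set" where
  "dset \<gamma> = {\<alpha>\<in>idx. \<forall>b. \<alpha> b \<le> \<gamma> b}"

lemma finite_dset: "finite (dset \<gamma>)"
proof -
  let ?E = "\<lambda>\<phi>::'a\<Rightarrow>nat. \<lambda>b. if b \<in> Basis then \<phi> b else 0"
  have "dset \<gamma> \<subseteq> ?E ` (PiE Basis (\<lambda>b. {..\<gamma> b}))"
  proof
    fix \<alpha> assume a: "\<alpha> \<in> dset \<gamma>"
    have "\<alpha> = ?E (restrict \<alpha> Basis)"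
      using a by (auto simp: dset_def idx_def fun_eq_iff)
    moreover have "restrict \<alpha> Basis \<in> PiE Basis (\<lambda>b. {..\<gamma> b})"
      using a by (auto simp: dset_def)
    ultimately show "\<alpha> \<in> ?E ` (PiE Basis (\<lambda>b. {..\<gamma> b}))" by blast
  qed
  moreover have "finite (PiE Basis (\<lambda>b. {..\<gamma> b}))"
    by (intro finite_PiE) auto
  ultimately show ?thesis by (meson finite_imageI finite_subset)
qed

definition sset :: "('a::euclidean_space \<Rightarrow> nat) \<Rightarrow> (('a \<Rightarrow> nat) \<times> ('a \<Rightarrow> nat)) set" where
  "sset \<gamma> = {p \<in> idx \<times> idx. (\<lambda>b. fst p b + snd p b) = \<gamma>}"

lemma finite_sset: "finite (sset \<gamma>)"
proof -
  have "sset \<gamma> \<subseteq> dset \<gamma> \<times> dset \<gamma>"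
    by (auto simp: sset_def dset_def)
  thus ?thesis using finite_dset by (meson finite_SigmaI finite_subset)
qed

definition pcoef :: "(('a::euclidean_space \<Rightarrow> nat) \<Rightarrow> real) \<Rightarrow> (('a \<Rightarrow> nat) \<Rightarrow> real) \<Rightarrow> ('a \<Rightarrow> nat) \<Rightarrow> real" where
  "pcoef c d \<gamma> = (\<Sum>p\<in>sset \<gamma>. c (fst p) * d (snd p))"

lemma has_sum_prod_real:
  fixes a b :: "'i \<Rightarrow> real"
  assumes "(a has_sum A) I" "(b has_sum B) J"
    and "(\<lambda>i. norm (a i)) summable_on I" "(\<lambda>j. norm (b j)) summable_on J"
  shows "((\<lambda>(i,j). a i * b j) has_sum A * B) (I \<times> J)"
proof -
  let ?NA = "infsum (\<lambda>i. norm (a i)) I" and ?NB = "infsum (\<lambda>j. norm (b j)) J"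
  have bd: "(\<lambda>(i,j). norm (a i * b j)) summable_on Sigma I (\<lambda>_. J)"
    proof (rule nonneg_bdd_above_summable_on)
      show "bdd_above (sum (\<lambda>(i,j). norm (a i * b j)) ` {F. F \<subseteq> Sigma I (\<lambda>_. J) \<and> finite F})"
      proof (rule bdd_aboveI2)
        fix F assume F: "F \<in> {F. F \<subseteq> Sigma I (\<lambda>_. J) \<and> finite F}"
        have "sum (\<lambda>(i,j). norm (a i * b j)) F \<le> sum (\<lambda>(i,j). norm (a i * b j)) (fst ` F \<times> snd ` F)"
          using F by (intro sum_mono2) (auto, force+)
        also have "\<dots> = (\<Sum>i\<in>fst ` F. norm (a i)) * (\<Sum>j\<in>snd ` F. norm (b j))"
          by (simp add: sum_product sum.cartesian_product abs_mult case_prod_unfold)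
        also have "\<dots> \<le> ?NA * ?NB"
          using F assms(3,4)
          by (intro mult_mono finite_sum_le_infsum sum_nonneg infsum_nonneg) auto
        finally show "sum (\<lambda>(i,j). norm (a i * b j)) F \<le> ?NA * ?NB" .
      qed
    qed auto
  hence "(\<lambda>p. norm ((\<lambda>(i,j). a i * b j) p)) summable_on I \<times> J"
    by (simp add: case_prod_unfold)
  hence sm: "(\<lambda>(i,j). a i * b j) summable_on Sigma I (\<lambda>_. J)"
    by (rule abs_summable_summable)
  have inner: "\<And>i. i \<in> I \<Longrightarrow> ((\<lambda>j. (\<lambda>(i,j). a i * b j) (i,j)) has_sum a i * B) J"
    using has_sum_cmult_right[OF assms(2)] by simp
  have outer: "((\<lambda>i. a i * B) has_sum A * B) I" by (rule has_sum_cmult_left[OF assms(1)])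
  show ?thesis by (rule has_sum_SigmaI[OF inner outer sm])
qed

lemma pser_mult:
  assumes "pser f x s c" "pser g x s d"
  shows "pser (\<lambda>y. f y * g y) x s (pcoef c d)"
  unfolding pser_def
proof (intro conjI allI impI)
  show "0 < s" using assms(1) unfolding pser_def by simp
  fix h :: 'a assume h: "pdisc s h"
  have 1: "((\<lambda>\<alpha>. c \<alpha> * mon \<alpha> h) has_sum f (x + h)) idx" using assms(1) h unfolding pser_def by simp
  have 2: "((\<lambda>\<alpha>. d \<alpha> * mon \<alpha> h) has_sum g (x + h)) idx" using assms(2) h unfolding pser_def by simp
  have P1: "((\<lambda>(\<alpha>,\<beta>). (c \<alpha> * mon \<alpha> h) * (d \<beta> * mon \<beta> h)) has_sum f (x + h) * g (x + h)) (idx \<times> idx)"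
    by (rule has_sum_prod_real[OF 1 2 pser_abs_h[OF assms(1) h] pser_abs_h[OF assms(2) h]])
  have P2: "((\<lambda>(\<gamma>,p). c (fst p) * d (snd p) * mon \<gamma> h) has_sum f (x + h) * g (x + h)) (Sigma idx sset)"
  proof -
    have "((\<lambda>(\<alpha>,\<beta>). (c \<alpha> * mon \<alpha> h) * (d \<beta> * mon \<beta> h)) has_sum f (x + h) * g (x + h)) (idx \<times> idx)
       = ((\<lambda>(\<gamma>,p). c (fst p) * d (snd p) * mon \<gamma> h) has_sum f (x + h) * g (x + h)) (Sigma idx sset)"
    proof (rule has_sum_reindex_bij_witness[where i=snd and j="\<lambda>p. ((\<lambda>k. fst p k + snd p k), p)"])
      fix a :: "('a \<Rightarrow> nat) \<times> ('a \<Rightarrow> nat)" assume "a \<in> idx \<times> idx"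
      thus "snd ((\<lambda>k. fst a k + snd a k), a) = a" by simp
      show "((\<lambda>k. fst a k + snd a k), a) \<in> Sigma idx sset"
        using \<open>a \<in> idx \<times> idx\<close> by (auto simp: idx_def sset_def)
      show "(\<lambda>(\<gamma>,p). c (fst p) * d (snd p) * mon \<gamma> h) ((\<lambda>k. fst a k + snd a k), a) =
            (\<lambda>(\<alpha>,\<beta>). (c \<alpha> * mon \<alpha> h) * (d \<beta> * mon \<beta> h)) a"
        by (simp add: mon_add case_prod_unfold mult_ac)
    next
      fix b :: "('a \<Rightarrow> nat) \<times> ('a \<Rightarrow> nat) \<times> ('a \<Rightarrow> nat)" assume b: "b \<in> Sigma idx sset"
      thus "((\<lambda>k. fst (snd b) k + snd (snd b) k), snd b) = b"
        by (auto simp: sset_def)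
      show "snd b \<in> idx \<times> idx" using b by (auto simp: sset_def)
    qed simp
    with P1 show ?thesis by simp
  qed
  have inner: "\<And>\<gamma>. \<gamma> \<in> idx \<Longrightarrow>
     ((\<lambda>p. (\<lambda>(\<gamma>,p). c (fst p) * d (snd p) * mon \<gamma> h) (\<gamma>, p)) has_sum pcoef c d \<gamma> * mon \<gamma> h) (sset \<gamma>)"
    by (rule has_sum_finiteI[OF finite_sset]) (simp add: pcoef_def sum_distrib_right)
  show "((\<lambda>\<gamma>. pcoef c d \<gamma> * mon \<gamma> h) has_sum f (x + h) * g (x + h)) idx"
    by (rule has_sum_SigmaD[OF P2 inner])
qed

lemma analytic_add:
  assumes "real_analytic f" "real_analytic g"
  shows "real_analytic (\<lambda>y. f y + g y)"
  unfolding real_analytic_def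
proof
  fix x
  obtain s c where 1: "pser f x s c" using assms(1) analytic_at_iff real_analytic_def by blast
  obtain s' d where 2: "pser g x s' d" using assms(2) analytic_at_iff real_analytic_def by blast
  have s: "0 < min s s'" using 1 2 by (simp add: pser_def)
  have "pser (\<lambda>y. f y + g y) x (min s s') (\<lambda>\<alpha>. c \<alpha> + d \<alpha>)"
    by (rule pser_add[OF pser_mono[OF 1 s] pser_mono[OF 2 s]]) auto
  thus "real_analytic_at (\<lambda>y. f y + g y) x" using analytic_at_iff by blast
qed

lemma analytic_mult:
  assumes "real_analytic f" "real_analytic g"
  shows "real_analytic (\<lambda>y. f y * g y)"
  unfolding real_analytic_def
proof
  fix x
  obtain s c where 1: "pser f x s c" using assms(1) analytic_at_iff real_analytic_def by blast
  obtain s' d where 2: "pser g x s' d" using assms(2) analytic_at_iff real_analytic_def by blast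
  have s: "0 < min s s'" using 1 2 by (simp add: pser_def)
  have "pser (\<lambda>y. f y * g y) x (min s s') (pcoef c d)"
    by (rule pser_mult[OF pser_mono[OF 1 s] pser_mono[OF 2 s]]) auto
  thus "real_analytic_at (\<lambda>y. f y * g y) x" using analytic_at_iff by blast
qed

lemma analytic_cmult:
  assumes "real_analytic f"
  shows "real_analytic (\<lambda>y. a * f y)"
  unfolding real_analytic_def
proof
  fix x
  obtain s c where 1: "pser f x s c" using assms(1) analytic_at_iff real_analytic_def by blast
  have "pser (\<lambda>y. a * f y) x s (\<lambda>\<alpha>. a * c \<alpha>)" by (rule pser_cmult[OF 1])
  thus "real_analytic_at (\<lambda>y. a * f y) x" using analytic_at_iff by blast
qed

lemma analytic_uminus:
  assumes "real_analytic f"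
  shows "real_analytic (\<lambda>y. - f y)"
  using analytic_cmult[OF assms, of "-1"] by simp

lemma zero_v_Basis: "((0::'a::euclidean_space), v) \<in> (Basis :: ('a \<times> 'b::euclidean_space) set) \<longleftrightarrow> v \<in> Basis"
  by (auto simp: Basis_prod_def)

lemma u_zero_Basis: "(u, (0::'b::euclidean_space)) \<in> (Basis :: ('a::euclidean_space \<times> 'b) set) \<longleftrightarrow> u \<in> Basis"
  by (auto simp: Basis_prod_def)

definition jmap :: "('b::euclidean_space \<Rightarrow> nat) \<Rightarrow> ('a::euclidean_space \<times> 'b \<Rightarrow> nat)" where
  "jmap \<alpha> = (\<lambda>p. if fst p = 0 then \<alpha> (snd p) else 0)"

definition sc :: "(('b::euclidean_space \<Rightarrow> nat) \<Rightarrow> real) \<Rightarrow> ('a::euclidean_space \<times> 'b \<Rightarrow> nat) \<Rightarrow> real" where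
  "sc c \<gamma> = (if (\<forall>u\<in>Basis. \<gamma> (u,0) = 0) then c (\<lambda>v. \<gamma> (0,v)) else 0)"

lemma mon_jmap:
  fixes h :: "'a::euclidean_space \<times> 'b::euclidean_space"
  shows "mon (jmap \<alpha> :: 'a \<times> 'b \<Rightarrow> nat) h = mon \<alpha> (snd h)"
proof -
  have disj: "(\<lambda>u. (u, 0::'b)) ` (Basis::'a set) \<inter> (\<lambda>v. (0::'a, v)) ` (Basis::'b set) = {}"
    by (auto simp: nonzero_Basis)
  have 1: "(\<Prod>p\<in>(\<lambda>u. (u, 0::'b)) ` (Basis::'a set). (h \<bullet> p) ^ jmap \<alpha> p) = 1"
    by (rule prod.neutral) (auto simp: jmap_def nonzero_Basis)
  have 2: "(\<Prod>p\<in>(\<lambda>v. (0::'a, v)) ` (Basis::'b set). (h \<bullet> p) ^ jmap \<alpha> p) = mon \<alpha> (snd h)"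
    by (subst prod.reindex) (auto simp: inj_on_def jmap_def mon_def inner_Pair_0)
  show ?thesis
    unfolding mon_def Basis_prod_def
    by (subst prod.union_disjoint) (use disj 1 2 in \<open>auto simp: mon_def\<close>)
qed

lemma pser_snd:
  fixes f :: "'b::euclidean_space \<Rightarrow> real"
  assumes "pser f x s c"
  shows "pser (\<lambda>p::'a::euclidean_space \<times> 'b. f (snd p)) (z, x) s (sc c)"
  unfolding pser_def
proof (intro conjI allI impI)
  show "0 < s" using assms unfolding pser_def by simp
  fix h :: "'a \<times> 'b" assume h: "pdisc s h"
  have h2: "pdisc s (snd h)" unfolding pdisc_def
  proof
    fix v :: 'b assume v: "v \<in> Basis"
    hence "((0::'a), v) \<in> (Basis :: ('a \<times> 'b) set)" by (simp add: zero_v_Basis)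
    with h have "\<bar>h \<bullet> (0, v)\<bar> \<le> s" unfolding pdisc_def by blast
    thus "\<bar>snd h \<bullet> v\<bar> \<le> s" by (simp add: inner_Pair_0)
  qed
  have 1: "((\<lambda>\<alpha>. c \<alpha> * mon \<alpha> (snd h)) has_sum f (x + snd h)) idx"
    using assms h2 unfolding pser_def by simp
  let ?T = "{\<gamma>\<in>(idx :: ('a \<times> 'b \<Rightarrow> nat) set). \<forall>u\<in>Basis. \<gamma> (u,0) = 0}"
  have "((\<lambda>\<alpha>. c \<alpha> * mon \<alpha> (snd h)) has_sum f (x + snd h)) idx
      = ((\<lambda>\<gamma>. sc c \<gamma> * mon \<gamma> h) has_sum f (x + snd h)) ?T"
  proof (rule has_sum_reindex_bij_witness[where i="\<lambda>\<gamma> v. \<gamma> (0,v)" and j=jmap])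
    fix \<alpha> :: "'b \<Rightarrow> nat" assume a: "\<alpha> \<in> idx"
    show "(\<lambda>v. jmap \<alpha> ((0::'a), v)) = \<alpha>" by (simp add: jmap_def)
    show "(jmap \<alpha> :: 'a \<times> 'b \<Rightarrow> nat) \<in> ?T"
      using a by (auto simp: jmap_def idx_def nonzero_Basis zero_v_Basis)
    show "sc c (jmap \<alpha>) * mon (jmap \<alpha>) h = c \<alpha> * mon \<alpha> (snd h)"
      by (simp only: mon_jmap) (simp add: sc_def jmap_def nonzero_Basis)
  next
    fix \<gamma> :: "'a \<times> 'b \<Rightarrow> nat" assume g: "\<gamma> \<in> ?T"
    show "jmap (\<lambda>v. \<gamma> (0, v)) = \<gamma>"
    proof
      fix p :: "'a \<times> 'b"
      show "jmap (\<lambda>v. \<gamma> (0, v)) p = \<gamma> p"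
      proof (cases "fst p = 0")
        case True thus ?thesis by (simp add: jmap_def) (metis prod.collapse)
      next
        case False
        have "\<gamma> p = 0"
        proof (cases "p \<in> Basis")
          case True
          with False have "snd p = 0" "fst p \<in> Basis" by (auto simp: Basis_prod_def)
          with g show ?thesis by (metis (mono_tags, lifting) mem_Collect_eq prod.collapse)
        next
          case False with g show ?thesis unfolding idx_def by blast
        qed
        with False show ?thesis by (simp add: jmap_def)
      qed
    qed
    show "(\<lambda>v. \<gamma> (0, v)) \<in> idx"
      using g by (auto simp: idx_def zero_v_Basis)
  qed simp
  with 1 have 3: "((\<lambda>\<gamma>. sc c \<gamma> * mon \<gamma> h) has_sum f (x + snd h)) ?T" by simp
  have "((\<lambda>\<gamma>. sc c \<gamma> * mon \<gamma> h) has_sum f (x + snd h)) ?T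
      = ((\<lambda>\<gamma>. sc c \<gamma> * mon \<gamma> h) has_sum f (x + snd h)) idx"
    by (rule has_sum_cong_neutral) (auto simp: sc_def)
  with 3 show "((\<lambda>\<gamma>. sc c \<gamma> * mon \<gamma> h) has_sum f (snd ((z, x) + h))) idx"
    by (simp add: snd_add)
qed

lemma analytic_snd:
  fixes f :: "'b::euclidean_space \<Rightarrow> real"
  assumes "real_analytic f"
  shows "real_analytic (\<lambda>p::'a::euclidean_space \<times> 'b. f (snd p))"
  unfolding real_analytic_def
proof
  fix p :: "'a \<times> 'b"
  obtain s c where 1: "pser f (snd p) s c" using assms analytic_at_iff real_analytic_def by blast
  have "pser (\<lambda>p::'a \<times> 'b. f (snd p)) (fst p, snd p) s (sc c)" by (rule pser_snd[OF 1])
  thus "real_analytic_at (\<lambda>p::'a \<times> 'b. f (snd p)) p" using analytic_at_iff by auto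
qed

definition pb :: "'a::euclidean_space \<Rightarrow> ('a \<Rightarrow> nat) \<Rightarrow> 'a \<Rightarrow> 'a \<Rightarrow> real" where
  "pb v \<alpha> b y = (real (\<alpha> b) * (y \<bullet> b) ^ (\<alpha> b - 1) * (v \<bullet> b)) * (\<Prod>b'\<in>Basis - {b}. (y \<bullet> b') ^ \<alpha> b')"

definition dterm :: "'a::euclidean_space \<Rightarrow> ('a \<Rightarrow> nat) \<Rightarrow> 'a \<Rightarrow> real" where
  "dterm v \<alpha> y = (\<Sum>b\<in>Basis. pb v \<alpha> b y)"

lemma deriv_mon:
  "((\<lambda>t. mon \<alpha> (k + t *\<^sub>R v)) has_real_derivative dterm v \<alpha> (k + t0 *\<^sub>R v)) (at t0)"
proof -
  have "((\<lambda>t. \<Prod>b\<in>Basis. (\<lambda>b t. ((k + t *\<^sub>R v) \<bullet> b) ^ \<alpha> b) b t) has_real_derivative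
      (\<Sum>b\<in>Basis. (real (\<alpha> b) * ((k + t0 *\<^sub>R v) \<bullet> b) ^ (\<alpha> b - 1) * (v \<bullet> b)) *
          (\<Prod>b'\<in>Basis - {b}. (\<lambda>b t. ((k + t *\<^sub>R v) \<bullet> b) ^ \<alpha> b) b' t0))) (at t0)"
  proof (rule has_field_derivative_prod)
    fix b :: 'a assume "b \<in> Basis"
    show "((\<lambda>t. ((k + t *\<^sub>R v) \<bullet> b) ^ \<alpha> b) has_real_derivative
            real (\<alpha> b) * ((k + t0 *\<^sub>R v) \<bullet> b) ^ (\<alpha> b - 1) * (v \<bullet> b)) (at t0)"
      unfolding inner_add_left inner_scaleR_left
      by (auto intro!: derivative_eq_intros)
  qed
  thus ?thesis by (simp add: mon_def dterm_def pb_def)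
qed

lemma deg_ge: "b \<in> Basis \<Longrightarrow> \<alpha> b \<le> deg \<alpha>"
  unfolding deg_def by (rule member_le_sum) auto

lemma deg_split: "b \<in> Basis \<Longrightarrow> deg \<alpha> = \<alpha> b + (\<Sum>b'\<in>Basis - {b}. \<alpha> b')"
  unfolding deg_def by (simp add: sum.remove)

lemma pb_bound:
  assumes y: "pdisc r y" and r: "0 < r" and b: "b \<in> Basis"
  shows "\<bar>pb v \<alpha> b y\<bar> * r \<le> real (\<alpha> b) * norm v * r ^ deg \<alpha>"
proof (cases "\<alpha> b = 0")
  case True thus ?thesis by (simp add: pb_def)
next
  case False
  have P: "\<bar>\<Prod>b'\<in>Basis - {b}. (y \<bullet> b') ^ \<alpha> b'\<bar> \<le> r ^ (\<Sum>b'\<in>Basis - {b}. \<alpha> b')"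
  proof -
    have "\<bar>\<Prod>b'\<in>Basis - {b}. (y \<bullet> b') ^ \<alpha> b'\<bar> = (\<Prod>b'\<in>Basis - {b}. \<bar>y \<bullet> b'\<bar> ^ \<alpha> b')"
      by (simp add: abs_prod power_abs)
    also have "\<dots> \<le> (\<Prod>b'\<in>Basis - {b}. r ^ \<alpha> b')"
      using y by (intro prod_mono) (auto simp: pdisc_def intro!: power_mono)
    also have "\<dots> = r ^ (\<Sum>b'\<in>Basis - {b}. \<alpha> b')" by (simp add: power_sum)
    finally show ?thesis .
  qed
  have Y: "\<bar>y \<bullet> b\<bar> ^ (\<alpha> b - 1) * r \<le> r ^ \<alpha> b"
  proof -
    have "\<bar>y \<bullet> b\<bar> ^ (\<alpha> b - 1) \<le> r ^ (\<alpha> b - 1)"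
      using y b by (intro power_mono) (auto simp: pdisc_def)
    hence "\<bar>y \<bullet> b\<bar> ^ (\<alpha> b - 1) * r \<le> r ^ (\<alpha> b - 1) * r" using r by simp
    also have "\<dots> = r ^ \<alpha> b" using False by (metis Suc_diff_1 bot_nat_0.not_eq_extremum power_Suc2)
    finally show ?thesis .
  qed
  have V: "\<bar>v \<bullet> b\<bar> \<le> norm v" by (rule Basis_le_norm[OF b])
  have "\<bar>pb v \<alpha> b y\<bar> * r = real (\<alpha> b) * \<bar>v \<bullet> b\<bar> * ((\<bar>y \<bullet> b\<bar> ^ (\<alpha> b - 1) * r) * \<bar>\<Prod>b'\<in>Basis - {b}. (y \<bullet> b') ^ \<alpha> b'\<bar>)"
    by (simp add: pb_def abs_mult power_abs mult_ac)
  also have "\<dots> \<le> real (\<alpha> b) * norm v * (r ^ \<alpha> b * r ^ (\<Sum>b'\<in>Basis - {b}. \<alpha> b'))"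
  proof (rule mult_mono)
    show "real (\<alpha> b) * \<bar>v \<bullet> b\<bar> \<le> real (\<alpha> b) * norm v" by (rule mult_left_mono[OF V]) simp
    show "(\<bar>y \<bullet> b\<bar> ^ (\<alpha> b - 1) * r) * \<bar>\<Prod>b'\<in>Basis - {b}. (y \<bullet> b') ^ \<alpha> b'\<bar>
          \<le> r ^ \<alpha> b * r ^ (\<Sum>b'\<in>Basis - {b}. \<alpha> b')"
      by (rule mult_mono[OF Y P]) (use r in auto)
    show "0 \<le> real (\<alpha> b) * norm v" by simp
    show "0 \<le> (\<bar>y \<bullet> b\<bar> ^ (\<alpha> b - 1) * r) * \<bar>\<Prod>b'\<in>Basis - {b}. (y \<bullet> b') ^ \<alpha> b'\<bar>"
      using r by simp
  qed
  also have "\<dots> = real (\<alpha> b) * norm v * r ^ deg \<alpha>"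
    using deg_split[OF b, of \<alpha>] by (simp add: power_add)
  finally show ?thesis .
qed

lemma dterm_bound:
  assumes y: "pdisc r y" and r: "0 < r"
  shows "\<bar>dterm v \<alpha> y\<bar> * r \<le> real (deg \<alpha>) * norm v * r ^ deg \<alpha>"
proof -
  have "\<bar>dterm v \<alpha> y\<bar> * r \<le> (\<Sum>b\<in>Basis. \<bar>pb v \<alpha> b y\<bar>) * r"
    unfolding dterm_def using r by (intro mult_right_mono sum_abs) auto
  also have "\<dots> = (\<Sum>b\<in>Basis. \<bar>pb v \<alpha> b y\<bar> * r)" by (simp add: sum_distrib_right)
  also have "\<dots> \<le> (\<Sum>b\<in>Basis. real (\<alpha> b) * norm v * r ^ deg \<alpha>)"
    by (intro sum_mono pb_bound[OF y r])
  also have "\<dots> = real (deg \<alpha>) * norm v * r ^ deg \<alpha>"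
    by (simp add: deg_def sum_distrib_right)
  finally show ?thesis .
qed

lemma nq_bound:
  assumes "0 \<le> q" "q < 1"
  obtains K where "K > 0" "\<And>n. real n * q ^ n \<le> K"
proof -
  have "(\<lambda>n. real n * q ^ n) \<longlonglongrightarrow> 0"
    using powser_times_n_limit_0[of q] assms by simp
  hence "Bseq (\<lambda>n. real n * q ^ n)" by (intro convergent_imp_Bseq convergentI)
  then obtain K where K: "K > 0" "\<forall>n. norm (real n * q ^ n) \<le> K" by (rule BseqE)
  have "real n * q ^ n \<le> K" for n
  proof -
    have "real n * q ^ n \<le> norm (real n * q ^ n)" unfolding real_norm_def by (rule abs_ge_self)
    also have "\<dots> \<le> K" using K(2) by blast
    finally show ?thesis .
  qed
  thus ?thesis using that K(1) by blast
qed

lemma pser_deg_summable: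
  assumes p: "pser f x s c" and r: "0 < r" "r < s"
  shows "(\<lambda>\<alpha>. \<bar>c \<alpha>\<bar> * real (deg \<alpha>) * r ^ deg \<alpha>) summable_on idx"
proof -
  have s: "0 < s" using r by simp
  obtain K where K: "K > 0" "\<And>n. real n * (r / s) ^ n \<le> K"
    using nq_bound[of "r / s"] r s by auto
  have "(\<lambda>\<alpha>. K * (\<bar>c \<alpha>\<bar> * s ^ deg \<alpha>)) summable_on idx"
    by (rule summable_on_cmult_right[OF pser_abs[OF p]])
  thus ?thesis
  proof (rule summable_on_comparison_test)
    fix \<alpha> :: "'a \<Rightarrow> nat"
    have "real (deg \<alpha>) * r ^ deg \<alpha> = (real (deg \<alpha>) * (r / s) ^ deg \<alpha>) * s ^ deg \<alpha>"
      using s by (simp add: power_divide)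
    also have "\<dots> \<le> K * s ^ deg \<alpha>"
      using K(2)[of "deg \<alpha>"] s by (intro mult_right_mono) auto
    finally have "\<bar>c \<alpha>\<bar> * (real (deg \<alpha>) * r ^ deg \<alpha>) \<le> \<bar>c \<alpha>\<bar> * (K * s ^ deg \<alpha>)"
      by (intro mult_left_mono) auto
    thus "\<bar>c \<alpha>\<bar> * real (deg \<alpha>) * r ^ deg \<alpha> \<le> K * (\<bar>c \<alpha>\<bar> * s ^ deg \<alpha>)"
      by (simp add: mult_ac)
    show "0 \<le> \<bar>c \<alpha>\<bar> * real (deg \<alpha>) * r ^ deg \<alpha>" using r by simp
  qed
qed

lemma countable_idx: "countable (idx :: ('a::euclidean_space \<Rightarrow> nat) set)"
proof -
  let ?E = "\<lambda>\<phi>::'a\<Rightarrow>nat. \<lambda>b. if b \<in> Basis then \<phi> b else 0"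
  have "idx \<subseteq> ?E ` (PiE Basis (\<lambda>b. UNIV))"
  proof
    fix \<alpha> :: "'a \<Rightarrow> nat" assume a: "\<alpha> \<in> idx"
    have "\<alpha> = ?E (restrict \<alpha> Basis)"
    proof
      fix b show "\<alpha> b = ?E (restrict \<alpha> Basis) b"
        using a unfolding idx_def by (cases "b \<in> Basis") simp_all
    qed
    moreover have "restrict \<alpha> Basis \<in> PiE Basis (\<lambda>b. UNIV)" by simp
    ultimately show "\<alpha> \<in> ?E ` (PiE Basis (\<lambda>b. UNIV))" by (rule image_eqI)
  qed
  moreover have "countable (PiE (Basis::'a set) (\<lambda>b. UNIV :: nat set))"
    by (intro countable_PiE) auto
  ultimately show ?thesis by (rule countable_subset[OF _ countable_image])
qed

lemma infinite_idx: "infinite (idx :: ('a::euclidean_space \<Rightarrow> nat) set)"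
proof
  assume fin: "finite (idx :: ('a \<Rightarrow> nat) set)"
  obtain b0 :: 'a where b0: "b0 \<in> Basis" using nonempty_Basis by blast
  let ?g = "\<lambda>n::nat. (\<lambda>b. if b = b0 then n else 0) :: 'a \<Rightarrow> nat"
  have "inj ?g"
  proof (rule injI)
    fix m n assume "?g m = ?g n"
    hence "?g m b0 = ?g n b0" by (rule arg_cong)
    thus "m = n" by simp
  qed
  moreover have "range ?g \<subseteq> idx" using b0 by (auto simp: idx_def)
  moreover have "finite (range ?g)" using fin calculation(2) by (rule finite_subset[rotated])
  ultimately have "finite (UNIV :: nat set)"
    using finite_imageD by blast
  thus False by simp
qed

definition enum :: "nat \<Rightarrow> ('a::euclidean_space \<Rightarrow> nat)" where
  "enum = from_nat_into idx"

lemma bij_enum: "bij_betw enum UNIV (idx :: ('a::euclidean_space \<Rightarrow> nat) set)"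
  unfolding enum_def by (rule bij_betw_from_nat_into[OF countable_idx infinite_idx])

lemma has_sum_enum: "(g has_sum S) idx \<longleftrightarrow> ((\<lambda>n. g (enum n)) has_sum S) UNIV"
  using has_sum_reindex_bij_betw[OF bij_enum, of g S] by simp

lemma summable_enum: "(g summable_on idx) \<longleftrightarrow> ((\<lambda>n. g (enum n)) summable_on UNIV)"
  unfolding summable_on_def using has_sum_enum by blast

lemma has_sum_sum_fin:
  fixes g :: "'b \<Rightarrow> 'c \<Rightarrow> real"
  assumes "finite B" "\<And>b. b \<in> B \<Longrightarrow> (g b has_sum S b) A"
  shows "((\<lambda>a. \<Sum>b\<in>B. g b a) has_sum (\<Sum>b\<in>B. S b)) A"
  using assms
proof (induction B rule: finite_induct)
  case empty thus ?case by simp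
next
  case (insert b B)
  have "((\<lambda>a. g b a + (\<Sum>b\<in>B. g b a)) has_sum (S b + (\<Sum>b\<in>B. S b))) A"
    using insert by (intro has_sum_add) auto
  thus ?case using insert by simp
qed

lemma deriv_series:
  fixes v k :: "'a::euclidean_space" and f :: "'a \<Rightarrow> real"
  assumes p: "pser f x s c" and s1: "0 < s1" "s1 < s" and k: "pdisc s1 k"
  shows "((\<lambda>\<alpha>. c \<alpha> * dterm v \<alpha> k) has_sum (\<Sum>\<^sub>\<infinity>\<alpha>\<in>idx. c \<alpha> * dterm v \<alpha> k)) idx"
    and "((\<lambda>t. f (x + k + t *\<^sub>R v)) has_real_derivative (\<Sum>\<^sub>\<infinity>\<alpha>\<in>idx. c \<alpha> * dterm v \<alpha> k)) (at 0)"
proof -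
  define s2 where "s2 = (s1 + s) / 2"
  have s2: "0 < s2" "s2 < s" "s1 < s2" using s1 by (auto simp: s2_def)
  define \<delta> where "\<delta> = (s - s1) / (2 * (norm v + 1))"
  have \<delta>: "0 < \<delta>" using s1 by (auto simp: \<delta>_def intro!: divide_pos_pos add_nonneg_pos)
  have \<delta>v: "\<delta> * norm v \<le> s2 - s1"
  proof -
    have "\<delta> * norm v = (s - s1) / 2 * (norm v / (norm v + 1))"
      by (simp add: \<delta>_def field_simps)
    also have "\<dots> \<le> (s - s1) / 2 * 1"
    proof (rule mult_left_mono)
      have "0 < norm v + 1" by (simp add: add_nonneg_pos)
      thus "norm v / (norm v + 1) \<le> 1" by (simp add: divide_le_eq_1_pos)
    qed (use s1 in simp)
    finally show ?thesis by (simp add: s2_def field_simps)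
  qed
  define S where "S = cball (0::real) \<delta>"
  have inS: "pdisc s2 (k + t *\<^sub>R v)" if t: "t \<in> S" for t
    unfolding pdisc_def
  proof
    fix b :: 'a assume b: "b \<in> Basis"
    have "\<bar>(k + t *\<^sub>R v) \<bullet> b\<bar> \<le> \<bar>k \<bullet> b\<bar> + \<bar>t\<bar> * \<bar>v \<bullet> b\<bar>"
      by (simp add: inner_add_left abs_mult[symmetric] abs_triangle_ineq)
    also have "\<dots> \<le> s1 + \<delta> * norm v"
    proof (rule add_mono)
      show "\<bar>k \<bullet> b\<bar> \<le> s1" using k b by (simp add: pdisc_def)
      show "\<bar>t\<bar> * \<bar>v \<bullet> b\<bar> \<le> \<delta> * norm v"
        using t Basis_le_norm[OF b, of v] by (intro mult_mono) (auto simp: S_def)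
    qed
    also have "\<dots> \<le> s2" using \<delta>v by simp
    finally show "\<bar>(k + t *\<^sub>R v) \<bullet> b\<bar> \<le> s2" .
  qed
  define M where "M \<alpha> = \<bar>c \<alpha>\<bar> * real (deg \<alpha>) * s2 ^ deg \<alpha> * (norm v / s2)" for \<alpha>
  have Msum: "M summable_on idx"
    unfolding M_def by (rule summable_on_cmult_left[OF pser_deg_summable[OF p s2(1,2)]])
  have Mbound: "\<bar>c \<alpha> * dterm v \<alpha> y\<bar> \<le> M \<alpha>" if y: "pdisc s2 y" for \<alpha> y
  proof -
    have "\<bar>dterm v \<alpha> y\<bar> * s2 \<le> real (deg \<alpha>) * norm v * s2 ^ deg \<alpha>"
      by (rule dterm_bound[OF y s2(1)])
    hence "\<bar>dterm v \<alpha> y\<bar> \<le> real (deg \<alpha>) * s2 ^ deg \<alpha> * (norm v / s2)"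
      using s2(1) by (simp add: field_simps)
    hence "\<bar>c \<alpha>\<bar> * \<bar>dterm v \<alpha> y\<bar> \<le> \<bar>c \<alpha>\<bar> * (real (deg \<alpha>) * s2 ^ deg \<alpha> * (norm v / s2))"
      by (rule mult_left_mono) simp
    thus ?thesis by (simp add: M_def abs_mult mult_ac)
  qed
  define fn where "fn n t = c (enum n) * mon (enum n) (k + t *\<^sub>R v)" for n t
  define fn' where "fn' n t = c (enum n) * dterm v (enum n) (k + t *\<^sub>R v)" for n t
  have Menum: "summable (\<lambda>n. M (enum n))"
  proof -
    have 1: "(\<lambda>n. M (enum n)) summable_on UNIV" by (rule summable_enum[THEN iffD1, OF Msum])
    have 2: "\<And>n. 0 \<le> M (enum n)" unfolding M_def using s2(1) by (intro mult_nonneg_nonneg) auto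
    show ?thesis by (rule summable_on_UNIV_nonneg_real_iff[THEN iffD1, OF 2 1])
  qed
  have hsk0: "\<forall>h. pdisc s h \<longrightarrow> ((\<lambda>\<alpha>. c \<alpha> * mon \<alpha> h) has_sum f (x + h)) idx"
    using p unfolding pser_def by (rule conjunct2)
  note hsk = hsk0[rule_format]
  have sums_f: "(\<lambda>n. fn n t) sums f (x + (k + t *\<^sub>R v))" if "t \<in> S" for t
  proof -
    have "((\<lambda>\<alpha>. c \<alpha> * mon \<alpha> (k + t *\<^sub>R v)) has_sum f (x + (k + t *\<^sub>R v))) idx"
      by (rule hsk[OF pdisc_mono[OF inS[OF that] less_imp_le[OF s2(2)]]])
    hence "((\<lambda>n. fn n t) has_sum f (x + (k + t *\<^sub>R v))) UNIV"
      unfolding fn_def has_sum_enum .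
    thus ?thesis by (rule has_sum_imp_sums)
  qed
  have S0: "0 \<in> S" using \<delta> by (simp add: S_def)
  have D: "summable (\<lambda>n. fn n 0)" "((\<lambda>t. \<Sum>n. fn n t) has_field_derivative (\<Sum>n. fn' n 0)) (at 0)"
  proof -
    have conv: "convex S" unfolding S_def by (rule convex_cball)
    have der: "\<And>n t. t \<in> S \<Longrightarrow> (fn n has_field_derivative fn' n t) (at t within S)"
      unfolding fn_def fn'_def
      by (rule has_field_derivative_at_within, rule DERIV_cmult, rule deriv_mon)
    have uc: "uniformly_convergent_on S (\<lambda>n t. \<Sum>i<n. fn' i t)"
    proof (rule Weierstrass_m_test'[OF _ Menum])
      fix n t assume "t \<in> S"
      show "norm (fn' n t) \<le> M (enum n)"
        unfolding fn'_def real_norm_def by (rule Mbound[OF inS[OF \<open>t \<in> S\<close>]])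
    qed
    have sm0: "summable (\<lambda>n. fn n 0)" using sums_f[OF S0] by (rule sums_summable)
    have int: "0 \<in> interior S" using \<delta> by (simp add: S_def)
    show "summable (\<lambda>n. fn n 0)" by (rule sm0)
    show "((\<lambda>t. \<Sum>n. fn n t) has_field_derivative (\<Sum>n. fn' n 0)) (at 0)"
      by (rule has_field_derivative_series'(2)[OF conv der uc S0 sm0 int])
  qed
  have sum': "(\<lambda>\<alpha>. c \<alpha> * dterm v \<alpha> k) summable_on idx"
  proof (rule abs_summable_summable)
    show "(\<lambda>\<alpha>. norm (c \<alpha> * dterm v \<alpha> k)) summable_on idx"
    proof (rule summable_on_comparison_test[OF Msum])
      fix \<alpha> show "norm (c \<alpha> * dterm v \<alpha> k) \<le> M \<alpha>"
        unfolding real_norm_def by (rule Mbound[OF pdisc_mono[OF k less_imp_le[OF s2(3)]]])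
    qed simp
  qed
  thus hs: "((\<lambda>\<alpha>. c \<alpha> * dterm v \<alpha> k) has_sum (\<Sum>\<^sub>\<infinity>\<alpha>\<in>idx. c \<alpha> * dterm v \<alpha> k)) idx"
    by (rule has_sum_infsum)
  have "((\<lambda>n. fn' n 0) has_sum (\<Sum>\<^sub>\<infinity>\<alpha>\<in>idx. c \<alpha> * dterm v \<alpha> k)) UNIV"
    using hs unfolding has_sum_enum fn'_def by simp
  hence eq': "(\<Sum>n. fn' n 0) = (\<Sum>\<^sub>\<infinity>\<alpha>\<in>idx. c \<alpha> * dterm v \<alpha> k)"
    by (intro sums_unique[symmetric] has_sum_imp_sums)
  have ev: "eventually (\<lambda>t. (\<Sum>n. fn n t) = f (x + k + t *\<^sub>R v)) (nhds 0)"
    using eventually_nhds_ball[OF \<delta>, of 0]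
  proof (rule eventually_mono)
    fix t :: real assume "t \<in> ball 0 \<delta>"
    hence "t \<in> S" by (auto simp: S_def)
    from sums_unique[OF sums_f[OF this]] show "(\<Sum>n. fn n t) = f (x + k + t *\<^sub>R v)"
      by (simp add: add.assoc)
  qed
  show "((\<lambda>t. f (x + k + t *\<^sub>R v)) has_real_derivative (\<Sum>\<^sub>\<infinity>\<alpha>\<in>idx. c \<alpha> * dterm v \<alpha> k)) (at 0)"
    using D(2) eq' ev by (subst DERIV_cong_ev[symmetric]) auto
qed

definition dd :: "'a::euclidean_space \<Rightarrow> ('a \<Rightarrow> real) \<Rightarrow> 'a \<Rightarrow> real" where
  "dd v f z = deriv (\<lambda>t. f (z + t *\<^sub>R v)) 0"

lemma get_pser: "real_analytic f \<Longrightarrow> \<exists>s c. pser f x s c"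
  unfolding real_analytic_def using analytic_at_iff by blast

lemma pdisc_zero: "0 \<le> s \<Longrightarrow> pdisc s 0"
  by (simp add: pdisc_def)

lemma dd_has:
  assumes "real_analytic f"
  shows "((\<lambda>t. f (z + t *\<^sub>R v)) has_real_derivative dd v f z) (at 0)"
proof -
  obtain s c where p: "pser f z s c" using get_pser[OF assms] by blast
  have s: "0 < s" using p by (simp add: pser_def)
  have "((\<lambda>t. f (z + 0 + t *\<^sub>R v)) has_real_derivative (\<Sum>\<^sub>\<infinity>\<alpha>\<in>idx. c \<alpha> * dterm v \<alpha> 0)) (at 0)"
    by (rule deriv_series(2)[OF p, of "s/2"]) (use s in \<open>auto intro: pdisc_zero\<close>)
  hence D: "((\<lambda>t. f (z + t *\<^sub>R v)) has_real_derivative (\<Sum>\<^sub>\<infinity>\<alpha>\<in>idx. c \<alpha> * dterm v \<alpha> 0)) (at 0)"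
    by simp
  hence "dd v f z = (\<Sum>\<^sub>\<infinity>\<alpha>\<in>idx. c \<alpha> * dterm v \<alpha> 0)"
    unfolding dd_def by (rule DERIV_imp_deriv)
  with D show ?thesis by simp
qed

lemma dd_has_at:
  assumes "real_analytic f"
  shows "((\<lambda>t. f (z + t *\<^sub>R v)) has_real_derivative dd v f (z + t0 *\<^sub>R v)) (at t0)"
proof -
  have "((\<lambda>s. f ((z + t0 *\<^sub>R v) + s *\<^sub>R v)) has_real_derivative dd v f (z + t0 *\<^sub>R v)) (at 0)"
    by (rule dd_has[OF assms])
  moreover have "(\<lambda>s. f ((z + t0 *\<^sub>R v) + s *\<^sub>R v)) = (\<lambda>s. (\<lambda>t. f (z + t *\<^sub>R v)) (s + t0))"
    by (simp add: scaleR_add_left add_ac)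
  ultimately have "((\<lambda>s. (\<lambda>t. f (z + t *\<^sub>R v)) (s + t0)) has_real_derivative dd v f (z + t0 *\<^sub>R v)) (at 0)"
    by simp
  hence "((\<lambda>t. f (z + t *\<^sub>R v)) has_real_derivative dd v f (z + t0 *\<^sub>R v)) (at (0 + t0))"
    by (subst DERIV_shift) 
  thus ?thesis by simp
qed

lemma dd_periodic:
  assumes "periodic_coord p f"
  shows "periodic_coord p (dd v f)"
  unfolding periodic_coord_def
proof (intro allI ballI)
  fix z :: 'a and b :: 'a assume b: "b \<in> Basis"
  have "(\<lambda>t. f (z + p *\<^sub>R b + t *\<^sub>R v)) = (\<lambda>t. f ((z + t *\<^sub>R v) + p *\<^sub>R b))"
    by (simp add: add_ac)
  also have "\<dots> = (\<lambda>t. f (z + t *\<^sub>R v))"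
    using assms b unfolding periodic_coord_def by simp
  finally show "dd v f (z + p *\<^sub>R b) = dd v f z" by (simp add: dd_def)
qed

lemma pb_zero: "\<alpha> b = 0 \<Longrightarrow> pb v \<alpha> b y = 0"
  by (simp add: pb_def)

lemma pb_shift:
  assumes b: "b \<in> Basis"
  shows "pb v (\<gamma>(b := Suc (\<gamma> b))) b k = (v \<bullet> b) * real (Suc (\<gamma> b)) * mon \<gamma> k"
proof -
  have P: "(\<Prod>b'\<in>Basis - {b}. (k \<bullet> b') ^ (\<gamma>(b := Suc (\<gamma> b))) b') = (\<Prod>b'\<in>Basis - {b}. (k \<bullet> b') ^ \<gamma> b')"
    by (rule prod.cong) auto
  have M: "mon \<gamma> k = (k \<bullet> b) ^ \<gamma> b * (\<Prod>b'\<in>Basis - {b}. (k \<bullet> b') ^ \<gamma> b')"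
    unfolding mon_def using b by (simp add: prod.remove)
  show ?thesis unfolding pb_def P M by simp
qed

lemma dd_pser:
  fixes v x :: "'a::euclidean_space"
  assumes p: "pser f x s c"
  defines "cd \<equiv> \<lambda>\<gamma>. \<Sum>b\<in>Basis. (v \<bullet> b) * real (Suc (\<gamma> b)) * c (\<gamma>(b := Suc (\<gamma> b)))"
  shows "pser (dd v f) x (s / 2) cd"
  unfolding pser_def
proof (intro conjI allI impI)
  have s: "0 < s" using p by (simp add: pser_def)
  show "0 < s / 2" using s by simp
  fix k :: 'a assume k: "pdisc (s / 2) k"
  have s1: "0 < s / 2" "s / 2 < s" using s by auto
  let ?Q = "\<Sum>\<^sub>\<infinity>\<alpha>\<in>idx. c \<alpha> * dterm v \<alpha> k"
  have HS: "((\<lambda>\<alpha>. c \<alpha> * dterm v \<alpha> k) has_sum ?Q) idx"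
    by (rule deriv_series(1)[OF p s1 k])
  have DV: "((\<lambda>t. f (x + k + t *\<^sub>R v)) has_real_derivative ?Q) (at 0)"
    by (rule deriv_series(2)[OF p s1 k])
  have ddeq: "dd v f (x + k) = ?Q"
    unfolding dd_def by (rule DERIV_imp_deriv[OF DV])
  define Qb where "Qb b = (\<Sum>\<^sub>\<infinity>\<alpha>\<in>idx. c \<alpha> * pb v \<alpha> b k)" for b
  have sumb: "(\<lambda>\<alpha>. c \<alpha> * pb v \<alpha> b k) summable_on idx" if b: "b \<in> Basis" for b
  proof (rule abs_summable_summable)
    have Msum: "(\<lambda>\<alpha>. (\<bar>c \<alpha>\<bar> * real (deg \<alpha>) * (s/2) ^ deg \<alpha>) * (norm v / (s/2))) summable_on idx"
      by (rule summable_on_cmult_left[OF pser_deg_summable[OF p s1]])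
    show "(\<lambda>\<alpha>. norm (c \<alpha> * pb v \<alpha> b k)) summable_on idx"
    proof (rule summable_on_comparison_test[OF Msum])
      fix \<alpha> :: "'a \<Rightarrow> nat"
      have "\<bar>pb v \<alpha> b k\<bar> * (s/2) \<le> real (\<alpha> b) * norm v * (s/2) ^ deg \<alpha>"
        by (rule pb_bound[OF k s1(1) b])
      also have "\<dots> \<le> real (deg \<alpha>) * norm v * (s/2) ^ deg \<alpha>"
        using deg_ge[OF b, of \<alpha>] s by (intro mult_right_mono) auto
      finally have "\<bar>pb v \<alpha> b k\<bar> \<le> real (deg \<alpha>) * (s/2) ^ deg \<alpha> * (norm v / (s/2))"
        using s by (simp add: field_simps)
      hence "\<bar>c \<alpha>\<bar> * \<bar>pb v \<alpha> b k\<bar> \<le> \<bar>c \<alpha>\<bar> * (real (deg \<alpha>) * (s/2) ^ deg \<alpha> * (norm v / (s/2)))"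
        by (rule mult_left_mono) simp
      thus "norm (c \<alpha> * pb v \<alpha> b k) \<le> \<bar>c \<alpha>\<bar> * real (deg \<alpha>) * (s/2) ^ deg \<alpha> * (norm v / (s/2))"
        by (simp add: abs_mult mult_ac)
    qed simp
  qed
  have HSb: "((\<lambda>\<alpha>. c \<alpha> * pb v \<alpha> b k) has_sum Qb b) idx" if "b \<in> Basis" for b
    unfolding Qb_def by (rule has_sum_infsum[OF sumb[OF that]])
  have "((\<lambda>\<alpha>. \<Sum>b\<in>Basis. c \<alpha> * pb v \<alpha> b k) has_sum (\<Sum>b\<in>Basis. Qb b)) idx"
    by (rule has_sum_sum_fin[OF finite_Basis HSb])
  hence "((\<lambda>\<alpha>. c \<alpha> * dterm v \<alpha> k) has_sum (\<Sum>b\<in>Basis. Qb b)) idx"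
    by (simp add: dterm_def sum_distrib_left)
  hence Qeq: "?Q = (\<Sum>b\<in>Basis. Qb b)" using HS has_sum_unique by blast
  have HSb2: "((\<lambda>\<gamma>. (v \<bullet> b) * real (Suc (\<gamma> b)) * c (\<gamma>(b := Suc (\<gamma> b))) * mon \<gamma> k) has_sum Qb b) idx"
    if b: "b \<in> Basis" for b
  proof -
    let ?T = "{\<alpha>\<in>idx. \<alpha> b \<noteq> 0}"
    have "((\<lambda>\<alpha>. c \<alpha> * pb v \<alpha> b k) has_sum Qb b) idx \<longleftrightarrow> ((\<lambda>\<alpha>. c \<alpha> * pb v \<alpha> b k) has_sum Qb b) ?T"
      by (rule has_sum_cong_neutral) (auto simp: pb_zero)
    with HSb[OF b] have 1: "((\<lambda>\<alpha>. c \<alpha> * pb v \<alpha> b k) has_sum Qb b) ?T" by simp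
    have "((\<lambda>\<gamma>. (v \<bullet> b) * real (Suc (\<gamma> b)) * c (\<gamma>(b := Suc (\<gamma> b))) * mon \<gamma> k) has_sum Qb b) idx
        \<longleftrightarrow> ((\<lambda>\<alpha>. c \<alpha> * pb v \<alpha> b k) has_sum Qb b) ?T"
    proof (rule has_sum_reindex_bij_witness[where j="\<lambda>\<gamma>. \<gamma>(b := Suc (\<gamma> b))" and i="\<lambda>\<alpha>. \<alpha>(b := \<alpha> b - 1)"])
      fix \<gamma> :: "'a \<Rightarrow> nat" assume g: "\<gamma> \<in> idx"
      show "(\<gamma>(b := Suc (\<gamma> b)))(b := (\<gamma>(b := Suc (\<gamma> b))) b - 1) = \<gamma>" by simp
      show "\<gamma>(b := Suc (\<gamma> b)) \<in> ?T" using g b by (auto simp: idx_def)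
      show "c (\<gamma>(b := Suc (\<gamma> b))) * pb v (\<gamma>(b := Suc (\<gamma> b))) b k =
            (v \<bullet> b) * real (Suc (\<gamma> b)) * c (\<gamma>(b := Suc (\<gamma> b))) * mon \<gamma> k"
        by (simp add: pb_shift[OF b] mult_ac)
    next
      fix \<alpha> :: "'a \<Rightarrow> nat" assume a: "\<alpha> \<in> ?T"
      show "(\<alpha>(b := \<alpha> b - 1))(b := Suc ((\<alpha>(b := \<alpha> b - 1)) b)) = \<alpha>"
        using a by (auto simp: fun_eq_iff)
      show "\<alpha>(b := \<alpha> b - 1) \<in> idx" using a b by (auto simp: idx_def)
    qed simp
    with 1 show ?thesis by simp
  qed
  have "((\<lambda>\<gamma>. \<Sum>b\<in>Basis. (v \<bullet> b) * real (Suc (\<gamma> b)) * c (\<gamma>(b := Suc (\<gamma> b))) * mon \<gamma> k)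
          has_sum (\<Sum>b\<in>Basis. Qb b)) idx"
    by (rule has_sum_sum_fin[OF finite_Basis HSb2])
  hence "((\<lambda>\<gamma>. cd \<gamma> * mon \<gamma> k) has_sum ?Q) idx"
    unfolding Qeq cd_def by (simp add: sum_distrib_right)
  thus "((\<lambda>\<gamma>. cd \<gamma> * mon \<gamma> k) has_sum dd v f (x + k)) idx"
    by (simp add: ddeq)
qed

lemma dd_analytic:
  assumes "real_analytic f"
  shows "real_analytic (dd v f)"
  unfolding real_analytic_def
proof
  fix x
  obtain s c where p: "pser f x s c" using get_pser[OF assms] by blast
  from dd_pser[OF p, where v=v] show "real_analytic_at (dd v f) x"
    using analytic_at_iff by blast
qed

lemma mm_bounded_bilinear:
  "bounded_bilinear (\<lambda>(A::real^'n^'m) (B::real^'k^'n). A ** B)"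
proof -
  have "bilinear (\<lambda>(A::real^'n^'m) (B::real^'k^'n). A ** B)"
    unfolding bilinear_def
  proof (intro conjI allI)
    fix A :: "real^'n^'m"
    show "linear (\<lambda>B::real^'k^'n. A ** B)"
      by (rule linearI) (simp_all add: vec_eq_iff matrix_matrix_mult_def sum_distrib_left sum.distrib distrib_left mult_ac)
  next
    fix B :: "real^'k^'n"
    show "linear (\<lambda>A::real^'n^'m. A ** B)"
      by (rule linearI) (simp_all add: vec_eq_iff matrix_matrix_mult_def algebra_simps sum.distrib sum_distrib_left)
  qed
  thus ?thesis by (simp add: bilinear_conv_bounded_bilinear)
qed

lemma mm_has_vector_derivative:
  fixes f :: "real \<Rightarrow> real^'n^'m" and g :: "real \<Rightarrow> real^'k^'n"
  assumes "(f has_vector_derivative f') (at t)" "(g has_vector_derivative g') (at t)"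
  shows "((\<lambda>s. f s ** g s) has_vector_derivative (f t ** g' + f' ** g t)) (at t)"
  using bounded_bilinear.has_vector_derivative[OF mm_bounded_bilinear assms] .

lemma vec2_deriv:
  fixes F :: "real \<Rightarrow> real^'m^'k"
  assumes "\<And>i j. ((\<lambda>s. F s $ i $ j) has_real_derivative (F' $ i $ j)) (at t)"
  shows "(F has_vector_derivative F') (at t)"
  unfolding has_vector_derivative_def
proof (subst has_derivative_componentwise_within, intro ballI)
  fix b :: "real^'m^'k" assume "b \<in> Basis"
  then obtain i u where u: "u \<in> (Basis :: (real^'m) set)" and bi: "b = axis i u"
    unfolding Basis_vec_def by blast
  from u obtain j where uj: "u = axis j 1" unfolding Basis_vec_def by auto
  have e: "\<And>M :: real^'m^'k. M \<bullet> b = M $ i $ j"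
    by (simp add: bi uj inner_axis)
  show "((\<lambda>x. F x \<bullet> b) has_derivative (\<lambda>x. x *\<^sub>R F' \<bullet> b)) (at t within UNIV)"
  proof -
    have eq: "(\<lambda>x. x * F' $ i $ j) = (*) (F' $ i $ j)" by (auto simp: fun_eq_iff mult.commute)
    show ?thesis using assms[of i j] unfolding e has_field_derivative_def by (simp add: eq)
  qed
qed

lemma entry_deriv:
  fixes F :: "real \<Rightarrow> real^'m^'k"
  assumes "(F has_vector_derivative F') (at t)"
  shows "((\<lambda>s. F s $ i $ j) has_real_derivative (F' $ i $ j)) (at t)"
proof -
  have bl: "bounded_linear (\<lambda>M :: real^'m^'k. M $ i $ j)"
    by (rule bounded_linear_compose[OF bounded_linear_vec_nth bounded_linear_vec_nth])
  have D: "((\<lambda>x. F x $ i $ j) has_derivative (\<lambda>x. (x *\<^sub>R F') $ i $ j)) (at t)"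
    by (rule bounded_linear.has_derivative[OF bl assms[unfolded has_vector_derivative_def]])
  have eq: "(\<lambda>x. (x *\<^sub>R F') $ i $ j) = (*) (F' $ i $ j)" by (auto simp: fun_eq_iff mult.commute)
  show ?thesis using D unfolding has_field_derivative_def eq .
qed

lemma mm2: "((A :: real^2^2) ** B) $ i $ j = A $ i $ 1 * B $ 1 $ j + A $ i $ 2 * B $ 2 $ j"
  by (simp add: matrix_matrix_mult_def sum_2)

lemma analytic_mat_mult:
  assumes "analytic_mat F" "analytic_mat G"
  shows "analytic_mat (\<lambda>x. F x ** G x)"
  unfolding analytic_mat_def mm2
  using assms unfolding analytic_mat_def
  by (intro allI analytic_add analytic_mult) auto

lemma analytic_mat_add:
  assumes "analytic_mat F" "analytic_mat G"
  shows "analytic_mat (\<lambda>x. F x + G x)"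
  using assms unfolding analytic_mat_def by (auto intro!: analytic_add)

lemma analytic_mat_snd:
  assumes "analytic_mat (F :: 'b::euclidean_space \<Rightarrow> real^2^2)"
  shows "analytic_mat (\<lambda>p::'a::euclidean_space \<times> 'b. F (snd p))"
  using assms unfolding analytic_mat_def by (auto intro!: analytic_snd)

lemma trace2_comm: "trace2 ((A :: real^2^2) ** B) = trace2 (B ** A)"
  by (simp add: trace2_def mm2)

definition adj2 :: "real^2^2 \<Rightarrow> real^2^2" where
  "adj2 M = (\<chi> i j. if i = 1 then (if j = 1 then M$2$2 else - M$1$2)
                     else (if j = 1 then - M$2$1 else M$1$1))"

lemma adj2_entries:
  "adj2 M $ 1 $ 1 = M $ 2 $ 2" "adj2 M $ 1 $ 2 = - M $ 1 $ 2"
  "adj2 M $ 2 $ 1 = - M $ 2 $ 1" "adj2 M $ 2 $ 2 = M $ 1 $ 1"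
  by (simp_all add: adj2_def)

lemma mat2_eqI:
  fixes A B :: "real^2^2"
  assumes "A$1$1 = B$1$1" "A$1$2 = B$1$2" "A$2$1 = B$2$1" "A$2$2 = B$2$2"
  shows "A = B"
  using assms by (simp add: vec_eq_iff forall_2)

lemma adj2_inv:
  assumes "det M = 1"
  shows "M ** adj2 M = mat 1" "adj2 M ** M = mat 1"
  using assms by (auto intro!: mat2_eqI simp: mm2 adj2_entries det_2 mat_def algebra_simps)

lemma matrix_inv_adj2:
  assumes "det M = 1"
  shows "matrix_inv M = adj2 M"
proof -
  have ex: "M ** adj2 M = mat 1 \<and> adj2 M ** M = mat 1" using adj2_inv[OF assms] by simp
  show ?thesis unfolding matrix_inv_def
  proof (rule someI2[of _ "adj2 M"])
    show "M ** adj2 M = mat 1 \<and> adj2 M ** M = mat 1" by (rule ex)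
  next
    fix A' assume "M ** A' = mat 1 \<and> A' ** M = mat 1"
    hence "A' ** M = mat 1" by simp
    have "A' = A' ** (M ** adj2 M)" using ex by simp
    also have "\<dots> = (A' ** M) ** adj2 M" by (rule matrix_mul_assoc)
    also have "\<dots> = adj2 M" using \<open>A' ** M = mat 1\<close> by simp
    finally show "A' = adj2 M" .
  qed
qed

lemma analytic_mat_adj2:
  assumes "analytic_mat F"
  shows "analytic_mat (\<lambda>x. adj2 (F x))"
  unfolding analytic_mat_def
proof (intro allI)
  fix i j :: 2
  have e: "\<And>i j. real_analytic (\<lambda>x. F x $ i $ j)" using assms by (simp add: analytic_mat_def)
  show "real_analytic (\<lambda>x. adj2 (F x) $ i $ j)"
    using exhaust_2[of i] exhaust_2[of j]
    by (auto simp: adj2_entries intro!: e analytic_uminus)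
qed

lemma periodic_adj2:
  assumes "periodic_coord p F"
  shows "periodic_coord p (\<lambda>x. adj2 (F x))"
  using assms by (simp add: periodic_coord_def)

lemma matrix_add_rdistrib': "((A :: real^'n^'m) + B) ** C = A ** C + B ** C"
  by (simp add: vec_eq_iff matrix_matrix_mult_def algebra_simps sum.distrib)

lemma trace2_add: "trace2 (A + B) = trace2 A + trace2 B"
  by (simp add: trace2_def)

lemma Basis_prod_snd:
  "(b :: 'a::euclidean_space \<times> 'b::euclidean_space) \<in> Basis \<Longrightarrow> snd b = 0 \<or> snd b \<in> Basis"
  by (auto simp: Basis_prod_def)

theorem proposition1p1:
  fixes \<mu> :: "real^'n"
    and \<A> \<A>' B :: "real^'n \<Rightarrow> real^2^2"
  assumes "rat_indep_1 \<mu>"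
    and "analytic_mat \<A>" and "periodic_coord 1 \<A>" and "\<forall>x. det (\<A> x) = 1"
    and "analytic_mat B" and "periodic_coord 2 B" and "\<forall>x. det (B x) = 1"
    and "\<forall>x. B (x + \<mu>) ** \<A> x ** matrix_inv (B x) = \<A>' x"
    and "embeddable \<mu> \<A>'"
  shows "embeddable \<mu> \<A>"
proof -
  obtain A' :: "real \<times> (real^'n) \<Rightarrow> real^2^2" and \<Phi>' :: "real \<Rightarrow> real \<times> (real^'n) \<Rightarrow> real^2^2"
    where A'an: "analytic_mat A'" and A'per: "periodic_coord 2 A'"
      and A'tr: "\<forall>\<theta>. trace2 (A' \<theta>) = 0"
      and P0: "\<forall>\<theta>. \<Phi>' 0 \<theta> = mat 1"
      and Pd: "\<forall>\<theta> t. ((\<lambda>s. \<Phi>' s \<theta>) has_vector_derivative (A' (\<theta> + t *\<^sub>R (1, \<mu>)) ** \<Phi>' t \<theta>)) (at t)"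
      and P1: "\<forall>\<theta>'. \<Phi>' 1 (0, \<theta>') = \<A>' \<theta>'"
    using assms(9) unfolding embeddable_def by blast
  define G where "G y = adj2 (B y)" for y
  have BG: "B y ** G y = mat 1" "G y ** B y = mat 1" for y
    using adj2_inv assms(7) by (simp_all add: G_def)
  have BGX: "X ** B y ** G y = X" for X :: "real^2^2" and y
    by (simp flip: matrix_mul_assoc add: BG)
  have GBX: "X ** G y ** B y = X" for X :: "real^2^2" and y
    by (simp flip: matrix_mul_assoc add: BG)
  have Aeq: "\<A> x = G (x + \<mu>) ** \<A>' x ** B x" for x
  proof -
    have "\<A>' x = B (x + \<mu>) ** \<A> x ** G x"
      using assms(8) matrix_inv_adj2 assms(7) by (simp add: G_def)
    hence "G (x + \<mu>) ** \<A>' x ** B x = G (x + \<mu>) ** (B (x + \<mu>) ** \<A> x ** G x) ** B x" by simp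
    also have "\<dots> = (G (x + \<mu>) ** B (x + \<mu>)) ** \<A> x ** (G x ** B x)" by (simp add: matrix_mul_assoc)
    also have "\<dots> = \<A> x" using BG by simp
    finally show ?thesis by simp
  qed
  have Ban: "real_analytic (\<lambda>y. B y $ i $ j)" for i j using assms(5) by (simp add: analytic_mat_def)
  have Gan: "analytic_mat G" unfolding G_def by (rule analytic_mat_adj2[OF assms(5)])
  have Gent: "real_analytic (\<lambda>y. G y $ i $ j)" for i j using Gan by (simp add: analytic_mat_def)
  define DG where "DG y = (\<chi> i j. dd \<mu> (\<lambda>z. G z $ i $ j) y)" for y
  have DGe: "DG y $ i $ j = dd \<mu> (\<lambda>z. G z $ i $ j) y" for y i j by (simp add: DG_def)
  have DGan: "analytic_mat DG" unfolding analytic_mat_def DGe by (intro allI dd_analytic Gent)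
  have Gper: "periodic_coord 2 G" unfolding G_def by (rule periodic_adj2[OF assms(6)])
  have DGper: "periodic_coord 2 DG"
    unfolding periodic_coord_def
  proof (intro allI ballI)
    fix y :: "real^'n" and b :: "real^'n" assume b: "b \<in> Basis"
    have "periodic_coord 2 (\<lambda>z. G z $ i $ j)" for i j
      using Gper by (simp add: periodic_coord_def)
    hence "periodic_coord 2 (dd \<mu> (\<lambda>z. G z $ i $ j))" for i j by (rule dd_periodic)
    hence "dd \<mu> (\<lambda>z. G z $ i $ j) (y + 2 *\<^sub>R b) = dd \<mu> (\<lambda>z. G z $ i $ j) y" for i j
      using b unfolding periodic_coord_def by blast
    thus "DG (y + 2 *\<^sub>R b) = DG y" by (simp add: vec_eq_iff DGe)
  qed
  define An where "An p = DG (snd p) ** B (snd p) + G (snd p) ** A' p ** B (snd p)" for p :: "real \<times> (real^'n)"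
  define \<Phi> where "\<Phi> t \<theta> = G (snd \<theta> + t *\<^sub>R \<mu>) ** \<Phi>' t \<theta> ** B (snd \<theta>)" for t and \<theta> :: "real \<times> (real^'n)"
  have Anan: "analytic_mat An"
    unfolding An_def
    by (rule analytic_mat_add[OF analytic_mat_mult[OF analytic_mat_snd[OF DGan] analytic_mat_snd[OF assms(5)]]
          analytic_mat_mult[OF analytic_mat_mult[OF analytic_mat_snd[OF Gan] A'an] analytic_mat_snd[OF assms(5)]]])
  have Anper: "periodic_coord 2 An"
    unfolding periodic_coord_def
  proof (intro allI ballI)
    fix p :: "real \<times> (real^'n)" and b :: "real \<times> (real^'n)" assume b: "b \<in> Basis"
    have yper: "F (snd p + 2 *\<^sub>R snd b) = F (snd p)" if "periodic_coord 2 F" for F :: "real^'n \<Rightarrow> real^2^2"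
      using Basis_prod_snd[OF b] that unfolding periodic_coord_def by auto
    have "A' (p + 2 *\<^sub>R b) = A' p" using A'per b unfolding periodic_coord_def by blast
    thus "An (p + 2 *\<^sub>R b) = An p"
      unfolding An_def using yper[OF DGper] yper[OF assms(6)] yper[OF Gper] by simp
  qed
  have Antr: "trace2 (An p) = 0" for p
  proof -
    define y where "y = snd p"
    have t2: "trace2 (G y ** A' p ** B y) = 0"
    proof -
      have "trace2 (G y ** A' p ** B y) = trace2 (B y ** (G y ** A' p))" by (rule trace2_comm)
      also have "\<dots> = trace2 ((B y ** G y) ** A' p)" by (simp add: matrix_mul_assoc)
      also have "\<dots> = 0" using A'tr[rule_format, of p] BG by simp
      finally show ?thesis .
    qed
    define d where "d i j = dd \<mu> (\<lambda>z. B z $ i $ j) y" for i j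
    have dB: "((\<lambda>t. B (y + t *\<^sub>R \<mu>) $ i $ j) has_real_derivative d i j) (at 0)" for i j
      unfolding d_def using dd_has[OF Ban[of i j], of y \<mu>] by simp
    have dneg: "dd \<mu> (\<lambda>z. - B z $ i $ j) y = - d i j" for i j
    proof -
      have 1: "((\<lambda>t. - B (y + t *\<^sub>R \<mu>) $ i $ j) has_real_derivative dd \<mu> (\<lambda>z. - B z $ i $ j) y) (at 0)"
        using dd_has[OF analytic_uminus[OF Ban[of i j]], of y \<mu>] by simp
      have 2: "((\<lambda>t. - B (y + t *\<^sub>R \<mu>) $ i $ j) has_real_derivative - d i j) (at 0)"
        by (rule DERIV_minus[OF dB])
      show ?thesis by (rule DERIV_unique[OF 1 2])
    qed
    have Ge: "(\<lambda>z. G z $ 1 $ 1) = (\<lambda>z. B z $ 2 $ 2)" "(\<lambda>z. G z $ 1 $ 2) = (\<lambda>z. - B z $ 1 $ 2)"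
      "(\<lambda>z. G z $ 2 $ 1) = (\<lambda>z. - B z $ 2 $ 1)" "(\<lambda>z. G z $ 2 $ 2) = (\<lambda>z. B z $ 1 $ 1)"
      by (simp_all add: G_def adj2_entries)
    have detd: "d 1 1 * B y $ 2 $ 2 + B y $ 1 $ 1 * d 2 2 - (d 1 2 * B y $ 2 $ 1 + B y $ 1 $ 2 * d 2 1) = 0"
    proof -
      have 1: "((\<lambda>t. B (y + t *\<^sub>R \<mu>) $ 1 $ 1 * B (y + t *\<^sub>R \<mu>) $ 2 $ 2 - B (y + t *\<^sub>R \<mu>) $ 1 $ 2 * B (y + t *\<^sub>R \<mu>) $ 2 $ 1)
          has_real_derivative (B (y + 0 *\<^sub>R \<mu>) $ 1 $ 1 * d 2 2 + d 1 1 * B (y + 0 *\<^sub>R \<mu>) $ 2 $ 2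
               - (B (y + 0 *\<^sub>R \<mu>) $ 1 $ 2 * d 2 1 + d 1 2 * B (y + 0 *\<^sub>R \<mu>) $ 2 $ 1))) (at 0)"
        by (rule DERIV_diff[OF DERIV_mult'[OF dB[of 1 1] dB[of 2 2]] DERIV_mult'[OF dB[of 1 2] dB[of 2 1]]])
      have eqf: "(\<lambda>t. B (y + t *\<^sub>R \<mu>) $ 1 $ 1 * B (y + t *\<^sub>R \<mu>) $ 2 $ 2 - B (y + t *\<^sub>R \<mu>) $ 1 $ 2 * B (y + t *\<^sub>R \<mu>) $ 2 $ 1)
          = (\<lambda>t. 1)"
        using assms(7) by (simp add: det_2)
      have 2: "((\<lambda>t. 1::real) has_real_derivative 0) (at 0)" by (rule DERIV_const)
      from DERIV_unique[OF 1[unfolded eqf] 2] show ?thesis by (simp add: algebra_simps)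
    qed
    have t1: "trace2 (DG y ** B y) = 0"
      using detd by (simp add: trace2_def mm2 DGe Ge dneg d_def[symmetric] algebra_simps)
    show ?thesis using t1 t2 by (simp add: An_def y_def[symmetric] trace2_add)
  qed
  have Phi0: "\<Phi> 0 \<theta> = mat 1" for \<theta>
    using P0[rule_format, of \<theta>] BG by (simp add: \<Phi>_def)
  have Phi1: "\<Phi> 1 (0, \<theta>') = \<A> \<theta>'" for \<theta>'
    using P1 by (simp add: \<Phi>_def Aeq)
  have Phid: "((\<lambda>s. \<Phi> s \<theta>) has_vector_derivative (An (\<theta> + t *\<^sub>R (1, \<mu>)) ** \<Phi> t \<theta>)) (at t)" for \<theta> t
  proof -
    define y where "y = snd \<theta>"
    define x where "x = \<theta> + t *\<^sub>R (1, \<mu>)"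
    have sx: "snd x = y + t *\<^sub>R \<mu>" by (simp add: x_def y_def)
    have gd: "((\<lambda>s. G (y + s *\<^sub>R \<mu>)) has_vector_derivative DG (y + t *\<^sub>R \<mu>)) (at t)"
    proof (rule vec2_deriv)
      fix i j
      show "((\<lambda>s. G (y + s *\<^sub>R \<mu>) $ i $ j) has_real_derivative DG (y + t *\<^sub>R \<mu>) $ i $ j) (at t)"
        unfolding DGe using dd_has_at[OF Gent[of i j], of y \<mu> t] by simp
    qed
    have pd0: "((\<lambda>s. \<Phi>' s \<theta>) has_vector_derivative (A' x ** \<Phi>' t \<theta>)) (at t)"
      unfolding x_def by (rule Pd[rule_format])
    have pd: "((\<lambda>s. \<Phi>' s \<theta> ** B y) has_vector_derivative ((A' x ** \<Phi>' t \<theta>) ** B y)) (at t)"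
      using mm_has_vector_derivative[OF pd0 has_vector_derivative_const[of "B y"]] by simp
    have md: "((\<lambda>s. G (y + s *\<^sub>R \<mu>) ** (\<Phi>' s \<theta> ** B y)) has_vector_derivative
               (G (y + t *\<^sub>R \<mu>) ** ((A' x ** \<Phi>' t \<theta>) ** B y) + DG (y + t *\<^sub>R \<mu>) ** (\<Phi>' t \<theta> ** B y))) (at t)"
      by (rule mm_has_vector_derivative[OF gd pd])
    have feq: "(\<lambda>s. \<Phi> s \<theta>) = (\<lambda>s. G (y + s *\<^sub>R \<mu>) ** (\<Phi>' s \<theta> ** B y))"
      by (simp add: \<Phi>_def y_def matrix_mul_assoc)
    have veq: "An x ** \<Phi> t \<theta> =
        G (y + t *\<^sub>R \<mu>) ** ((A' x ** \<Phi>' t \<theta>) ** B y) + DG (y + t *\<^sub>R \<mu>) ** (\<Phi>' t \<theta> ** B y)"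
      by (simp add: An_def \<Phi>_def sx y_def[symmetric] matrix_add_rdistrib' matrix_mul_assoc BGX add.commute)
    show ?thesis using md unfolding feq x_def[symmetric] veq .
  qed
  show ?thesis
    unfolding embeddable_def
    using Anan Anper Antr Phi0 Phid Phi1 by blast
qed

end
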